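(* Consider the downtown bathtub model under perimeter control described in the context, with a fixed number $N_s$ of suburban commuters satisfying $N_s>\alpha n_j\left(\frac1\beta+\frac1\gamma\right)\left(\ln 2-\frac12\right)$, and let $C_s^{bp*}$ be the short-run equilibrium bathtub cost, $\theta^p\equiv\frac{C_s^{bp*}v_f}{\alpha L}$. Then (i) $$F^p(\theta^p)\equiv N_s-\alpha n_j\left(\frac1\beta+\frac1\gamma\right)\left(\frac{\theta^p}{4}+\ln 2-1\right)=0;$$ (ii) a queue develops at the perimeter boundary, and its length increases toward the desired arrival time $t^*$ (and decreases after it).
   Context: Downtown traffic: accumulation $n(t)\ge0$ evolves as $\dot n(t)=I(t)-G(t)$ with outflow $G(t)=n(t)v(t)/L$, $L>0$ the trip length, speed $v(t)=v_f(1-n(t)/n_j)$, $v_f,n_j>0$; downtown travel time $T(t)=L/v(t)$. Perimeter control: the critical accumulation is $n_j/2$; the inflow into the downtown area is $I(t)=I_p:=\frac{n_jv_f}{4L}$ when $n(t)=n_j/2$ and $I(t)=A_b(t)$ (the arrival rate of vehicles at the perimeter boundary) when $n(t)<n_j/2$. Vehicles that cannot enter wait in a first-in-first-out point queue at the boundary; if $q(t)$ is the number of queued vehicles when the commuter arriving at work at $t$ reaches the boundary, that commuter's waiting time is $T_w(t)=q(t)/I_p$. With $[t_s^p,t_e^p]$ the period during which control is active, the downtown travel time is $T^p(t)=T(t)$ for $t\le t_s^p$ or $t>t_e^p$ and $T^p(t)=\frac{L}{v_f/2}+T_w(t)$ for $t_s^p<t\le t_e^p$. A suburban commuter arriving at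 time $t$ has bathtub cost $C_s^{bp}(t)=\alpha T^p(t)+s(t)$, where $s(t)=\beta(t^*-t)$ for $t\le t^*$, $s(t)=\gamma(t-t^* )$ for $t>t^*$, $\alpha,\beta,\gamma>0$, $t^*$ the desired arrival time. A short-run equilibrium under perimeter control is $(n(\cdot),q(\cdot),C_s^{bp*})$ with $C_s^{bp}(t)=C_s^{bp*}$ if $n(t)>0$ and $\ge C_s^{bp*}$ if $n(t)=0$; $n(t)=n_j/2$ if $q(t)>0$ and $n(t)\le n_j/2$ if $q(t)=0$; and $\int_{\mathbb{R}}n(t)v(t)/L\,dt=N_s$. *)

theory Defs
  imports "HOL-Analysis.Analysis"
begin

text \<open>Parameters: trip length L, free-flow speed vf, jam accumulation nj,
  value of time alpha, schedule-delay penalties beta (early), gamma (late),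
  desired arrival time tstar.\<close>

definition speed :: "real \<Rightarrow> real \<Rightarrow> real \<Rightarrow> real" where
  "speed vf nj x = vf * (1 - x / nj)"

definition perim_inflow :: "real \<Rightarrow> real \<Rightarrow> real \<Rightarrow> real" where
  "perim_inflow L vf nj = nj * vf / (4 * L)"

definition sched_delay :: "real \<Rightarrow> real \<Rightarrow> real \<Rightarrow> real \<Rightarrow> real" where
  "sched_delay \<beta> \<gamma> tstar t = (if t \<le> tstar then \<beta> * (tstar - t) else \<gamma> * (t - tstar))"

text \<open>Downtown travel time under perimeter control: control is active at t
  exactly when n(t) = nj/2 (the critical accumulation); then the travel time is
  L/(vf/2) plus the waiting time q(t)/I_p, otherwise it is T(t) = L/v(t).\<close>
definition travel_time_p ::
  "real \<Rightarrow> real \<Rightarrow> real \<Rightarrow> (real \<Rightarrow> real) \<Rightarrow> (real \<Rightarrow> real) \<Rightarrow> real \<Rightarrow> real" where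
  "travel_time_p L vf nj n q t =
     (if n t = nj / 2 then L / (vf / 2) + q t / perim_inflow L vf nj
      else L / speed vf nj (n t))"

definition bathtub_cost_p ::
  "real \<Rightarrow> real \<Rightarrow> real \<Rightarrow> real \<Rightarrow> real \<Rightarrow> real \<Rightarrow> real \<Rightarrow>
   (real \<Rightarrow> real) \<Rightarrow> (real \<Rightarrow> real) \<Rightarrow> real \<Rightarrow> real" where
  "bathtub_cost_p L vf nj \<alpha> \<beta> \<gamma> tstar n q t =
     \<alpha> * travel_time_p L vf nj n q t + sched_delay \<beta> \<gamma> tstar t"

definition short_run_eq_p ::
  "real \<Rightarrow> real \<Rightarrow> real \<Rightarrow> real \<Rightarrow> real \<Rightarrow> real \<Rightarrow> real \<Rightarrow> real \<Rightarrow>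
   (real \<Rightarrow> real) \<Rightarrow> (real \<Rightarrow> real) \<Rightarrow> real \<Rightarrow> bool" where
  "short_run_eq_p L vf nj \<alpha> \<beta> \<gamma> tstar Ns n q C \<longleftrightarrow>
     (\<forall>t. 0 \<le> n t \<and> 0 \<le> q t) \<and>
     (\<forall>t. n t > 0 \<longrightarrow> bathtub_cost_p L vf nj \<alpha> \<beta> \<gamma> tstar n q t = C) \<and>
     (\<forall>t. n t = 0 \<longrightarrow> bathtub_cost_p L vf nj \<alpha> \<beta> \<gamma> tstar n q t \<ge> C) \<and>
     (\<forall>t. q t > 0 \<longrightarrow> n t = nj / 2) \<and>
     (\<forall>t. q t = 0 \<longrightarrow> n t \<le> nj / 2) \<and>
     ((\<lambda>t. n t * speed vf nj (n t) / L) has_integral Ns) UNIV"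

end

theory Submission
  imports Defs
begin

definition gg :: "real \<Rightarrow> real" where
  "gg u = (if u \<le> 1 then 0 else if u \<le> 2 then (u - 1) / u^2 else 1/4)"

definition L1 :: "real \<Rightarrow> real" where "L1 v = ln v + 1 / v - 1"

definition GG :: "real \<Rightarrow> real" where
  "GG u = L1 (max 1 (min u 2)) + max (u - 2) 0 / 4"

lemma GG_le1: "u \<le> 1 \<Longrightarrow> GG u = 0"
  by (simp add: GG_def L1_def)

lemma GG_ge2: "u \<ge> 2 \<Longrightarrow> GG u = u/4 + ln 2 - 1"
  by (simp add: GG_def L1_def field_simps)

lemma GG_le: assumes "u \<le> 2" shows "GG u \<le> ln 2 - 1/2"
proof -
  define v where "v = max 1 (min u 2)"
  have v: "1 \<le> v" "v \<le> 2" by (auto simp: v_def)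
  have "GG u = L1 v" using assms by (simp add: GG_def v_def)
  have "ln (v/2) \<le> v/2 - 1" by (rule ln_le_minus_one) (use v in auto)
  then have "ln v - ln 2 \<le> v/2 - 1" using v by (simp add: ln_div)
  moreover have "1/v - 1/2 \<le> (2 - v)/2"
  proof -
    have "0 \<le> (v-1)*(2-v)" using v by simp
    then show ?thesis using v by (simp add: field_simps algebra_simps power2_eq_square)
  qed
  ultimately have "L1 v \<le> ln 2 - 1/2" by (simp add: L1_def)
  with \<open>GG u = L1 v\<close> show ?thesis by simp
qed

lemma GG_cont: "continuous_on UNIV GG"
  unfolding GG_def L1_def
  by (intro continuous_intros) auto

lemma GG_deriv: assumes "u \<noteq> 1" "u \<noteq> 2" shows "(GG has_real_derivative gg u) (at u)"
proof -
  consider "u < 1" | "1 < u \<and> u < 2" | "u > 2" using assms by linarith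
  then show ?thesis
  proof cases
    case 1
    have "((\<lambda>x. 0) has_real_derivative 0) (at u)" by simp
    then have "((\<lambda>x. 0) has_real_derivative gg u) (at u)" using 1 by (simp add: gg_def)
    then show ?thesis
      by (rule has_field_derivative_transform_within_open[of _ _ _ "{..<1}"]) (use 1 in \<open>auto simp: GG_le1\<close>)
  next
    case 2
    have "((\<lambda>x. ln x + 1 / x - 1) has_real_derivative (1/u - 1/u^2)) (at u)"
      using 2 by (auto intro!: derivative_eq_intros simp: power2_eq_square)
    moreover have "1/u - 1/u^2 = gg u" using 2 by (simp add: gg_def field_simps power2_eq_square)
    ultimately have "((\<lambda>x. ln x + 1 / x - 1) has_real_derivative gg u) (at u)" by simp
    then show ?thesis
      by (rule has_field_derivative_transform_within_open[of _ _ _ "{1<..<2}"]) (use 2 in \<open>auto simp: GG_def L1_def\<close>)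
  next
    case 3
    have "((\<lambda>x. x/4 + ln 2 - 1) has_real_derivative 1/4) (at u)"
      by (auto intro!: derivative_eq_intros)
    then have "((\<lambda>x. x/4 + ln 2 - 1) has_real_derivative gg u) (at u)" using 3 by (simp add: gg_def)
    then show ?thesis
      by (rule has_field_derivative_transform_within_open[of _ _ _ "{2<..}"]) (use 3 in \<open>auto simp: GG_ge2\<close>)
  qed
qed

lemma pointwise:
  fixes L vf nj \<alpha> C s n0 q0 TT :: real
  assumes "L > 0" "vf > 0" "nj > 0" "\<alpha> > 0" "0 \<le> n0" "0 \<le> q0"
    and c1: "n0 > 0 \<Longrightarrow> \<alpha> * TT + s = C" and c2: "n0 = 0 \<Longrightarrow> \<alpha> * TT + s \<ge> C"
    and c3: "q0 > 0 \<Longrightarrow> n0 = nj/2" and c4: "q0 = 0 \<Longrightarrow> n0 \<le> nj/2"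
    and TT: "TT = (if n0 = nj/2 then L/(vf/2) + q0/(nj* vf/(4*L)) else L/(vf *(1-n0/nj)))"
  shows "n0 * (vf *(1-n0/nj))/L = nj* vf/L * gg ((C - s)*(vf/(\<alpha>*L)))
     \<and> q0 = nj/4 * max ((C - s)*(vf/(\<alpha>*L)) - 2) 0"
proof -
  define u where "u = (C - s)*(vf/(\<alpha>*L))"
  consider "n0 = 0" | "n0 = nj/2" | "0 < n0 \<and> n0 \<noteq> nj/2" using assms by linarith
  then show ?thesis
  proof cases
    case 1
    then have TT': "TT = L / vf" using TT assms by simp
    have q: "q0 = 0" using c3 1 assms by force
    have "C - s \<le> \<alpha> * L / vf" using c2[OF 1] TT' by simp
    then have "u \<le> (\<alpha> * L / vf) * (vf/(\<alpha>*L))" unfolding u_def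
      by (rule mult_right_mono) (use assms in auto)
    then have "u \<le> 1" using assms by simp
    then show ?thesis using 1 q unfolding u_def[symmetric] by (simp add: gg_def)
  next
    case 2
    then have TT': "TT = L/(vf/2) + q0/(nj* vf/(4*L))" using TT by simp
    have "C - s = \<alpha> * TT" using c1 2 assms by force
    then have "u = 2 + 4*q0/nj" using assms unfolding u_def TT' by (simp add: field_simps)
    then have "u \<ge> 2" "q0 = nj/4 * (u - 2)" using assms by auto
    moreover have gg4: "gg u = 1/4" using \<open>u \<ge> 2\<close> by (auto simp: gg_def)
    moreover have "n0 * (vf * (1-n0/nj))/L = nj * vf/L * (1/4)" unfolding 2 using assms(1-3) by (simp add: field_simps)
    ultimately show ?thesis unfolding u_def[symmetric] gg4 by (simp add: max_def)
  next
    case 3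
    have q: "q0 = 0" using c3 3 assms by force
    have lt: "n0 < nj/2" using c4[OF q] 3 by simp
    define x where "x = n0/nj"
    have x: "0 < x" "x < 1/2" using 3 lt assms by (auto simp: x_def field_simps)
    have n0: "n0 = nj * x" using assms by (simp add: x_def)
    have TT': "TT = L/(vf *(1-x))" using TT 3 by (simp add: x_def)
    have "C - s = \<alpha> * TT" using c1 3 assms by force
    then have uu: "u = 1/(1-x)" using assms x unfolding u_def TT' by (simp add: field_simps)
    have u12: "1 < u" "u < 2" using x unfolding uu by (auto simp: field_simps)
    have "gg u = (u - 1)/u^2" using u12 by (simp add: gg_def)
    also have "\<dots> = x*(1-x)" using x unfolding uu by (simp add: field_simps power2_eq_square)
    finally have ggx: "gg u = x*(1-x)" .
    have "n0 * (vf * (1-n0/nj))/L = nj * vf/L * gg u" unfolding n0 ggx using assms(3) by (simp add: field_simps)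
    then show ?thesis using q u12 unfolding u_def[symmetric] by (simp add: max_def)
  qed
qed

lemma qmono:
  fixes nj u1 u2 :: real
  assumes "nj > 0" "u1 < u2"
  shows "nj/4 * max (u1 - 2) 0 \<le> nj/4 * max (u2 - 2) 0 \<and>
    (nj/4 * max (u1 - 2) 0 > 0 \<longrightarrow> nj/4 * max (u1 - 2) 0 < nj/4 * max (u2 - 2) 0)"
proof -
  have "max (u1 - 2) 0 \<le> max (u2 - 2) 0" using assms by auto
  moreover have "max (u1 - 2) 0 > 0 \<Longrightarrow> max (u1 - 2) 0 < max (u2 - 2) 0" using assms by auto
  ultimately show ?thesis using assms by (auto simp: zero_less_mult_iff)
qed

lemma ftc_piece:
  fixes c \<theta> kb tstar a :: real
  assumes "kb > 0" "a \<le> tstar" "\<theta> - kb * (tstar - a) \<le> 1"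
  shows "((\<lambda>t. c * gg (\<theta> - kb * (tstar - t))) has_integral c * (GG \<theta> / kb)) {a..tstar}"
proof -
  define f where "f t = GG (\<theta> - kb * (tstar - t)) / kb" for t
  have "((\<lambda>t. gg (\<theta> - kb * (tstar - t))) has_integral (f tstar - f a)) {a..tstar}"
  proof (rule fundamental_theorem_of_calculus_interior_strong[where S = "{tstar - (\<theta> - 1)/kb, tstar - (\<theta> - 2)/kb}"])
    show "finite {tstar - (\<theta> - 1)/kb, tstar - (\<theta> - 2)/kb}" by simp
    show "a \<le> tstar" by fact
    show "continuous_on {a..tstar} f" unfolding f_def
      by (intro continuous_intros continuous_on_compose2[OF GG_cont]) (use assms in auto)
  next
    fix x assume x: "x \<in> {a<..<tstar} - {tstar - (\<theta> - 1)/kb, tstar - (\<theta> - 2)/kb}"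
    have n1: "\<theta> - kb * (tstar - x) \<noteq> 1" and n2: "\<theta> - kb * (tstar - x) \<noteq> 2"
      using x assms(1) by (auto simp: field_simps)
    have "((\<lambda>t. \<theta> - kb * (tstar - t)) has_real_derivative kb) (at x)"
      by (auto intro!: derivative_eq_intros)
    from DERIV_chain2[OF GG_deriv[OF n1 n2] this]
    have "((\<lambda>t. GG (\<theta> - kb * (tstar - t))) has_real_derivative gg (\<theta> - kb * (tstar - x)) * kb) (at x)" .
    then have "(f has_real_derivative gg (\<theta> - kb * (tstar - x)) * kb / kb) (at x)"
      unfolding f_def by (rule DERIV_cdivide)
    then show "(f has_vector_derivative gg (\<theta> - kb * (tstar - x))) (at x)"
      using assms(1) by (simp add: has_real_derivative_iff_has_vector_derivative)
  qed
  moreover have "f tstar - f a = GG \<theta> / kb" using assms by (simp add: f_def GG_le1)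
  ultimately have "((\<lambda>t. gg (\<theta> - kb * (tstar - t))) has_integral (GG \<theta> / kb)) {a..tstar}" by simp
  then show ?thesis by (rule has_integral_mult_right)
qed

lemma ftc_piece2:
  fixes c \<theta> kg tstar b :: real
  assumes "kg > 0" "tstar \<le> b" "\<theta> - kg * (b - tstar) \<le> 1"
  shows "((\<lambda>t. c * gg (\<theta> - kg * (t - tstar))) has_integral c * (GG \<theta> / kg)) {tstar..b}"
proof -
  define f where "f t = - GG (\<theta> - kg * (t - tstar)) / kg" for t
  have "((\<lambda>t. gg (\<theta> - kg * (t - tstar))) has_integral (f b - f tstar)) {tstar..b}"
  proof (rule fundamental_theorem_of_calculus_interior_strong[where S = "{tstar + (\<theta> - 1)/kg, tstar + (\<theta> - 2)/kg}"])
    show "finite {tstar + (\<theta> - 1)/kg, tstar + (\<theta> - 2)/kg}" by simp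
    show "tstar \<le> b" by fact
    show "continuous_on {tstar..b} f" unfolding f_def
      by (intro continuous_intros continuous_on_compose2[OF GG_cont]) (use assms in auto)
  next
    fix x assume x: "x \<in> {tstar<..<b} - {tstar + (\<theta> - 1)/kg, tstar + (\<theta> - 2)/kg}"
    have n1: "\<theta> - kg * (x - tstar) \<noteq> 1" and n2: "\<theta> - kg * (x - tstar) \<noteq> 2"
      using x assms(1) by (auto simp: field_simps)
    have "((\<lambda>t. \<theta> - kg * (t - tstar)) has_real_derivative - kg) (at x)"
      by (auto intro!: derivative_eq_intros)
    from DERIV_chain2[OF GG_deriv[OF n1 n2] this]
    have "((\<lambda>t. GG (\<theta> - kg * (t - tstar))) has_real_derivative gg (\<theta> - kg * (x - tstar)) * - kg) (at x)" .
    then have "((\<lambda>t. - GG (\<theta> - kg * (t - tstar))) has_real_derivative - (gg (\<theta> - kg * (x - tstar)) * - kg)) (at x)"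
      by (rule DERIV_minus)
    then have "(f has_real_derivative - (gg (\<theta> - kg * (x - tstar)) * - kg) / kg) (at x)"
      unfolding f_def by (rule DERIV_cdivide)
    then show "(f has_vector_derivative gg (\<theta> - kg * (x - tstar))) (at x)"
      using assms(1) by (simp add: has_real_derivative_iff_has_vector_derivative)
  qed
  moreover have "f b - f tstar = GG \<theta> / kg" using assms by (simp add: f_def GG_le1)
  ultimately have "((\<lambda>t. gg (\<theta> - kg * (t - tstar))) has_integral (GG \<theta> / kg)) {tstar..b}" by simp
  then show ?thesis by (rule has_integral_mult_right)
qed


lemma lemma4_aux:
  fixes L vf nj \<alpha> \<beta> \<gamma> tstar Ns C :: real and n q :: "real \<Rightarrow> real"
  assumes "L > 0" "vf > 0" "nj > 0" "\<alpha> > 0" "\<beta> > 0" "\<gamma> > 0"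
    and "Ns > \<alpha> * nj * (1 / \<beta> + 1 / \<gamma>) * (ln 2 - 1 / 2)"
    and "short_run_eq_p L vf nj \<alpha> \<beta> \<gamma> tstar Ns n q C"
  shows "Ns - \<alpha> * nj * (1 / \<beta> + 1 / \<gamma>) * ((C * vf / (\<alpha> * L)) / 4 + ln 2 - 1) = 0
    \<and> (\<exists>t. q t > 0)
    \<and> (\<forall>t1 t2. t1 < t2 \<and> t2 \<le> tstar \<longrightarrow> q t1 \<le> q t2 \<and> (q t1 > 0 \<longrightarrow> q t1 < q t2))
    \<and> (\<forall>t1 t2. tstar \<le> t1 \<and> t1 < t2 \<longrightarrow> q t2 \<le> q t1 \<and> (q t2 > 0 \<longrightarrow> q t2 < q t1))"
proof -
  note pos = assms(1-6)
  note E = assms(8)[unfolded short_run_eq_p_def]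
  define k where "k = vf / (\<alpha> * L)"
  define \<theta> where "\<theta> = C * k"
  define u where "u t = (C - sched_delay \<beta> \<gamma> tstar t) * k" for t
  define c where "c = nj * vf / L"
  define \<phi> where "\<phi> t = n t * speed vf nj (n t) / L" for t
  have k: "k > 0" using pos by (simp add: k_def)
  have pw: "\<phi> t = c * gg (u t) \<and> q t = nj/4 * max (u t - 2) 0" for t
  proof -
    have "n t * (vf * (1 - n t / nj)) / L = nj * vf / L * gg ((C - sched_delay \<beta> \<gamma> tstar t) * (vf / (\<alpha> * L)))
     \<and> q t = nj/4 * max ((C - sched_delay \<beta> \<gamma> tstar t) * (vf / (\<alpha> * L)) - 2) 0"
      apply (rule pointwise[where TT = "travel_time_p L vf nj n q t"])
      using pos E by (auto simp: bathtub_cost_p_def travel_time_p_def perim_inflow_def speed_def)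
    then show ?thesis by (simp add: \<phi>_def c_def u_def k_def speed_def)
  qed
  have uE: "t \<le> tstar \<Longrightarrow> u t = \<theta> - (k * \<beta>) * (tstar - t)" for t
    by (simp add: u_def \<theta>_def sched_delay_def algebra_simps)
  have uL: "tstar \<le> t \<Longrightarrow> u t = \<theta> - (k * \<gamma>) * (t - tstar)" for t
    by (cases "t = tstar") (auto simp: u_def \<theta>_def sched_delay_def algebra_simps)
  have kb: "k * \<beta> > 0" and kg: "k * \<gamma> > 0" using k pos by auto
  define a where "a = tstar - (\<bar>\<theta>\<bar> + 1) / (k * \<beta>)"
  define b where "b = tstar + (\<bar>\<theta>\<bar> + 1) / (k * \<gamma>)"
  have a: "a \<le> tstar" "\<theta> - (k * \<beta>) * (tstar - a) \<le> 1"
    using kb by (auto simp: a_def)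
  have b: "tstar \<le> b" "\<theta> - (k * \<gamma>) * (b - tstar) \<le> 1"
    using kg by (auto simp: b_def)
  have I1: "(\<phi> has_integral c * (GG \<theta> / (k * \<beta>))) {a..tstar}"
    using ftc_piece[OF kb a, of c] by (rule has_integral_eq[rotated]) (simp add: pw uE)
  have I2: "(\<phi> has_integral c * (GG \<theta> / (k * \<gamma>))) {tstar..b}"
    using ftc_piece2[OF kg b, of c] by (rule has_integral_eq[rotated]) (simp add: pw uL)
  have I: "(\<phi> has_integral (c * (GG \<theta> / (k * \<beta>)) + c * (GG \<theta> / (k * \<gamma>)))) {a..b}"
    by (rule has_integral_combine[OF a(1) b(1) I1 I2])
  have out: "\<phi> t = 0" if "t \<notin> {a..b}" for t
  proof -
    have "u t \<le> 1"
    proof (cases "t < a")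
      case True
      then have "(k * \<beta>) * (tstar - a) \<le> (k * \<beta>) * (tstar - t)" using kb True by (intro mult_left_mono) auto
      then show ?thesis using uE[of t] True a by simp
    next
      case False
      then have "t > b" using that by auto
      then have "(k * \<gamma>) * (b - tstar) \<le> (k * \<gamma>) * (t - tstar)" using kg \<open>t > b\<close> by (intro mult_left_mono) auto
      then show ?thesis using uL[of t] \<open>t > b\<close> b by simp
    qed
    then show ?thesis using pw[of t] by (simp add: gg_def)
  qed
  have "((\<lambda>t. if t \<in> {a..b} then \<phi> t else 0) has_integral (c * (GG \<theta> / (k * \<beta>)) + c * (GG \<theta> / (k * \<gamma>)))) UNIV"
    using I by (simp only: has_integral_restrict_UNIV)
  moreover have "(\<lambda>t. if t \<in> {a..b} then \<phi> t else 0) = \<phi>" using out by auto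
  ultimately have "(\<phi> has_integral (c * (GG \<theta> / (k * \<beta>)) + c * (GG \<theta> / (k * \<gamma>)))) UNIV" by simp
  moreover have "(\<phi> has_integral Ns) UNIV" using E unfolding \<phi>_def[abs_def] by blast
  ultimately have "Ns = c * (GG \<theta> / (k * \<beta>)) + c * (GG \<theta> / (k * \<gamma>))"
    using has_integral_unique by blast
  also have "\<dots> = \<alpha> * nj * (1 / \<beta> + 1 / \<gamma>) * GG \<theta>"
    using pos by (simp add: c_def k_def field_simps)
  finally have Ns: "Ns = \<alpha> * nj * (1 / \<beta> + 1 / \<gamma>) * GG \<theta>" .
  have A: "\<alpha> * nj * (1 / \<beta> + 1 / \<gamma>) > 0" using pos by (intro mult_pos_pos add_pos_pos) auto
  have th: "\<theta> > 2"
  proof (rule ccontr)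
    assume "\<not> \<theta> > 2"
    then have "GG \<theta> \<le> ln 2 - 1/2" by (intro GG_le) simp
    then have "Ns \<le> \<alpha> * nj * (1 / \<beta> + 1 / \<gamma>) * (ln 2 - 1/2)"
      unfolding Ns using A by (intro mult_left_mono) auto
    then show False using assms(7) by simp
  qed
  have th': "C * vf / (\<alpha> * L) = \<theta>" by (simp add: \<theta>_def k_def)
  have P1: "Ns - \<alpha> * nj * (1 / \<beta> + 1 / \<gamma>) * ((C * vf / (\<alpha> * L)) / 4 + ln 2 - 1) = 0"
    unfolding th' Ns using th by (simp add: GG_ge2)
  have "u tstar = \<theta>" using uE[of tstar] by simp
  then have "nj/4 * max (u tstar - 2) 0 > 0" using th pos by (intro mult_pos_pos) auto
  moreover have "q tstar = nj/4 * max (u tstar - 2) 0" using pw[of tstar] by blast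
  ultimately have "q tstar > 0" by linarith
  then have P2: "\<exists>t. q t > 0" by blast
  have P3: "q t1 \<le> q t2 \<and> (q t1 > 0 \<longrightarrow> q t1 < q t2)" if "t1 < t2" "t2 \<le> tstar" for t1 t2
  proof -
    have "(k * \<beta>) * (tstar - t2) < (k * \<beta>) * (tstar - t1)" using kb that by (intro mult_strict_left_mono) auto
    then have "u t1 < u t2" using uE[of t1] uE[of t2] that by simp
    moreover have "q t1 = nj/4 * max (u t1 - 2) 0" "q t2 = nj/4 * max (u t2 - 2) 0" using pw by blast+
    ultimately show ?thesis using qmono[OF pos(3)] by presburger
  qed
  have P4: "q t2 \<le> q t1 \<and> (q t2 > 0 \<longrightarrow> q t2 < q t1)" if "tstar \<le> t1" "t1 < t2" for t1 t2
  proof -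
    have "(k * \<gamma>) * (t1 - tstar) < (k * \<gamma>) * (t2 - tstar)" using kg that by (intro mult_strict_left_mono) auto
    then have "u t2 < u t1" using uL[of t1] uL[of t2] that by simp
    moreover have "q t1 = nj/4 * max (u t1 - 2) 0" "q t2 = nj/4 * max (u t2 - 2) 0" using pw by blast+
    ultimately show ?thesis using qmono[OF pos(3)] by presburger
  qed
  show ?thesis using P1 P2 P3 P4 by blast
qed


theorem lemma4:
  fixes L vf nj \<alpha> \<beta> \<gamma> tstar Ns C :: real and n q :: "real \<Rightarrow> real"
  assumes "L > 0" "vf > 0" "nj > 0" "\<alpha> > 0" "\<beta> > 0" "\<gamma> > 0"
    and "Ns > \<alpha> * nj * (1 / \<beta> + 1 / \<gamma>) * (ln 2 - 1 / 2)"
    and "short_run_eq_p L vf nj \<alpha> \<beta> \<gamma> tstar Ns n q C"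
  shows "Ns - \<alpha> * nj * (1 / \<beta> + 1 / \<gamma>) * ((C * vf / (\<alpha> * L)) / 4 + ln 2 - 1) = 0
    \<and> (\<exists>t. q t > 0)
    \<and> (\<forall>t1 t2. t1 < t2 \<and> t2 \<le> tstar \<longrightarrow> q t1 \<le> q t2 \<and> (q t1 > 0 \<longrightarrow> q t1 < q t2))
    \<and> (\<forall>t1 t2. tstar \<le> t1 \<and> t1 < t2 \<longrightarrow> q t2 \<le> q t1 \<and> (q t2 > 0 \<longrightarrow> q t2 < q t1))"
  using assms by (rule lemma4_aux)

end
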